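(* Let $f:\mathbb{R}^n\to\mathbb{R}$ be bounded below and continuously differentiable with $\nabla f$ Lipschitz with constant $L_{\nabla f}$. Let $x\in\mathbb{R}^n$, $\Delta>0$, points $y_1,\ldots,y_p$ with $\|y_i-x\|\le\beta\Delta$ for some $\beta>0$ and all $i$, and let $m$ be the minimum Frobenius norm quadratic interpolation model described in the context, with $\hat F$ invertible. Then for all $y\in B(x,\Delta)$, $|m(y)-f(y)|\le\kappa_{\mathrm{mf}}\Delta^2$ and $\|\nabla m(y)-\nabla f(y)\|\le\kappa_{\mathrm{mg}}\Delta$, where $$\kappa_{\mathrm{mf}}=\frac{L_{\nabla f}+\kappa_H}{2}(1+\sqrt n)\beta^2\|\hat M^\dagger\|_\infty+\frac{L_{\nabla f}+\kappa_H}{2},\qquad\kappa_{\mathrm{mg}}=2\kappa_{\mathrm{mf}}+2\kappa_H,$$ and $\kappa_H:=\frac{L_{\nabla f}}{2}p\beta^4\|\hat F^{-1}\|_\infty$.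
   Context: Here $n+2\le p\le(n+1)(n+2)/2-1$. Let $\hat s_i=(y_i-x)/\Delta$, $\hat M\in\mathbb{R}^{p\times(n+1)}$ with $i$-th row $[1,\hat s_i^T]$ (with Moore–Penrose pseudoinverse $\hat M^\dagger$), $\hat P\in\mathbb{R}^{p\times p}$ with $\hat P_{ij}=\tfrac12(\hat s_i^T\hat s_j)^2$, and $\hat F=\begin{bmatrix}\hat P&\hat M\\ \hat M^T&0\end{bmatrix}$. The model is $m(y)=c+g^T(y-x)+\tfrac12(y-x)^TH(y-x)$ where $(\hat\lambda_1,\ldots,\hat\lambda_p,c,\hat g)$ solves $\hat F[\hat\lambda;c;\hat g]=[f(y_1);\ldots;f(y_p);0;0_n]$, $g=\hat g/\Delta$, $H=\sum_{i}\lambda_i(y_i-x)(y_i-x)^T$ with $\lambda_i=\hat\lambda_i/\Delta^4$; equivalently $(c,g,H)$ minimizes $\tfrac14\|H\|_F^2$ over symmetric $H$ subject to $m(y_i)=f(y_i)$ for all $i$. $\|A\|_\infty$ is the maximum absolute row sum; $B(x,\Delta)=\{y:\|y-x\|\le\Delta\}$. *)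

theory Defs
  imports "HOL-Analysis.Analysis"
begin

text \<open>Matrices of variable size are represented as functions nat => nat => real;
  only entries with indices inside the stated dimensions are meaningful.\<close>

type_synonym rmat = "nat \<Rightarrow> nat \<Rightarrow> real"

definition mmul :: "rmat \<Rightarrow> nat \<Rightarrow> rmat \<Rightarrow> rmat" where
  "mmul A k B = (\<lambda>i j. \<Sum>l<k. A i l * B l j)"

definition supported :: "nat \<Rightarrow> nat \<Rightarrow> rmat \<Rightarrow> bool" where
  "supported r c A \<longleftrightarrow> (\<forall>i j. (r \<le> i \<or> c \<le> j) \<longrightarrow> A i j = 0)"

definition mat_norm_inf :: "nat \<Rightarrow> nat \<Rightarrow> rmat \<Rightarrow> real" where
  "mat_norm_inf r c A = Max ((\<lambda>i. \<Sum>j<c. \<bar>A i j\<bar>) ` {..<r})"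

definition mat_invertible :: "nat \<Rightarrow> rmat \<Rightarrow> bool" where
  "mat_invertible N A \<longleftrightarrow> (\<exists>B. \<forall>i<N. \<forall>j<N.
      mmul A N B i j = (if i = j then 1 else 0) \<and> mmul B N A i j = (if i = j then 1 else 0))"

definition mat_inv :: "nat \<Rightarrow> rmat \<Rightarrow> rmat" where
  "mat_inv N A = (THE B. supported N N B \<and> (\<forall>i<N. \<forall>j<N.
      mmul A N B i j = (if i = j then 1 else 0) \<and> mmul B N A i j = (if i = j then 1 else 0)))"

definition pinv :: "nat \<Rightarrow> nat \<Rightarrow> rmat \<Rightarrow> rmat" where
  "pinv r c M = (THE X. supported c r X
      \<and> (\<forall>i<r. \<forall>j<c. mmul (mmul M c X) r M i j = M i j)
      \<and> (\<forall>i<c. \<forall>j<r. mmul (mmul X r M) c X i j = X i j)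
      \<and> (\<forall>i<r. \<forall>j<r. mmul M c X i j = mmul M c X j i)
      \<and> (\<forall>i<c. \<forall>j<c. mmul X r M i j = mmul X r M j i))"

text \<open>A fixed enumeration 0..n-1 of the coordinate index type; the norms in the
  theorem are invariant under the choice of ordering of coordinates.\<close>
definition coord :: "nat \<Rightarrow> 'n::finite" where
  "coord = (SOME e. bij_betw e {..<CARD('n)} (UNIV :: 'n set))"

definition coord_idx :: "'n::finite \<Rightarrow> nat" where
  "coord_idx = inv_into {..<CARD('n)} coord"

definition shat :: "real^'n \<Rightarrow> real \<Rightarrow> (nat \<Rightarrow> real^'n) \<Rightarrow> nat \<Rightarrow> real^'n" where
  "shat x \<Delta> y i = (1 / \<Delta>) *\<^sub>R (y i - x)"

definition Mhat :: "real^'n \<Rightarrow> real \<Rightarrow> (nat \<Rightarrow> real^'n) \<Rightarrow> nat \<Rightarrow> rmat" where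
  "Mhat x \<Delta> y p = (\<lambda>i j. if i < p \<and> j < CARD('n) + 1 then
      (if j = 0 then 1 else shat x \<Delta> y i $ coord (j - 1)) else 0)"

definition Phat :: "real^'n \<Rightarrow> real \<Rightarrow> (nat \<Rightarrow> real^'n) \<Rightarrow> nat \<Rightarrow> rmat" where
  "Phat x \<Delta> y p = (\<lambda>i j. if i < p \<and> j < p then
      (1/2) * (shat x \<Delta> y i \<bullet> shat x \<Delta> y j)^2 else 0)"

definition Fhat :: "real^'n \<Rightarrow> real \<Rightarrow> (nat \<Rightarrow> real^'n) \<Rightarrow> nat \<Rightarrow> rmat" where
  "Fhat x \<Delta> y p = (\<lambda>i j.
      if i < p \<and> j < p then Phat x \<Delta> y p i j
      else if i < p \<and> p \<le> j \<and> j < p + CARD('n) + 1 then Mhat x \<Delta> y p i (j - p)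
      else if p \<le> i \<and> i < p + CARD('n) + 1 \<and> j < p then Mhat x \<Delta> y p j (i - p)
      else 0)"

text \<open>Solution vector \<open>[\<lambda>hat; c; ghat]\<close> of \<open>Fhat z = [f(y_1);...;f(y_p);0;0_n]\<close>.\<close>
definition model_sol :: "(real^'n \<Rightarrow> real) \<Rightarrow> real^'n \<Rightarrow> real \<Rightarrow> (nat \<Rightarrow> real^'n) \<Rightarrow> nat \<Rightarrow> nat \<Rightarrow> real" where
  "model_sol f x \<Delta> y p = (THE z. (\<forall>i. p + CARD('n) + 1 \<le> i \<longrightarrow> z i = 0) \<and>
      (\<forall>i < p + CARD('n) + 1. (\<Sum>j < p + CARD('n) + 1. Fhat x \<Delta> y p i j * z j)
          = (if i < p then f (y i) else 0)))"

definition model_c :: "(real^'n \<Rightarrow> real) \<Rightarrow> real^'n \<Rightarrow> real \<Rightarrow> (nat \<Rightarrow> real^'n) \<Rightarrow> nat \<Rightarrow> real" where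
  "model_c f x \<Delta> y p = model_sol f x \<Delta> y p p"

definition model_g :: "(real^'n \<Rightarrow> real) \<Rightarrow> real^'n \<Rightarrow> real \<Rightarrow> (nat \<Rightarrow> real^'n) \<Rightarrow> nat \<Rightarrow> real^'n" where
  "model_g f x \<Delta> y p = (\<chi> k. model_sol f x \<Delta> y p (p + 1 + coord_idx k) / \<Delta>)"

definition model_H :: "(real^'n \<Rightarrow> real) \<Rightarrow> real^'n \<Rightarrow> real \<Rightarrow> (nat \<Rightarrow> real^'n) \<Rightarrow> nat \<Rightarrow> real^'n^'n" where
  "model_H f x \<Delta> y p = (\<chi> a b. \<Sum>i<p. (model_sol f x \<Delta> y p i / \<Delta>^4) * (y i - x)$a * (y i - x)$b)"

definition model :: "(real^'n \<Rightarrow> real) \<Rightarrow> real^'n \<Rightarrow> real \<Rightarrow> (nat \<Rightarrow> real^'n) \<Rightarrow> nat \<Rightarrow> real^'n \<Rightarrow> real" where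
  "model f x \<Delta> y p z = model_c f x \<Delta> y p + model_g f x \<Delta> y p \<bullet> (z - x)
      + (1/2) * ((z - x) \<bullet> (model_H f x \<Delta> y p *v (z - x)))"

definition model_grad :: "(real^'n \<Rightarrow> real) \<Rightarrow> real^'n \<Rightarrow> real \<Rightarrow> (nat \<Rightarrow> real^'n) \<Rightarrow> nat \<Rightarrow> real^'n \<Rightarrow> real^'n" where
  "model_grad f x \<Delta> y p z = model_g f x \<Delta> y p + model_H f x \<Delta> y p *v (z - x)"

end

theory Submission
  imports Defs "Jordan_Normal_Form.Determinant"
begin


lemma sq_inv_exists:
  fixes K :: "real mat"
  assumes K: "K \<in> carrier_mat n n"
    and inj: "\<And>v. v \<in> carrier_vec n \<Longrightarrow> K *\<^sub>v v = 0\<^sub>v n \<Longrightarrow> v = 0\<^sub>v n"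
  shows "\<exists>Ki \<in> carrier_mat n n. K * Ki = 1\<^sub>m n \<and> Ki * K = 1\<^sub>m n"
proof -
  have "det K \<noteq> 0" using det_0_iff_vec_prod_zero[OF K] inj by blast
  from det_non_zero_imp_unit[OF K this, of "()"]
  show ?thesis unfolding Units_def ring_mat_def by auto
qed

lemma self_sprod_zero:
  fixes w :: "real Matrix.vec"
  assumes "w \<bullet> w = 0" "w \<in> carrier_vec r"
  shows "w = 0\<^sub>v r"
proof -
  have "(\<Sum>i\<in>{0..<r}. w $ i * w $ i) = 0" using assms by (simp add: scalar_prod_def)
  hence "\<forall>i\<in>{0..<r}. w $ i * w $ i = 0"
    by (subst sum_nonneg_eq_0_iff[symmetric]) auto
  thus ?thesis using assms(2) by (intro eq_vecI) auto
qed

definition mp_cond :: "real mat \<Rightarrow> real mat \<Rightarrow> bool" where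
  "mp_cond M X \<longleftrightarrow> M * X * M = M \<and> X * M * X = X \<and> transpose_mat (M * X) = M * X
     \<and> transpose_mat (X * M) = X * M"

lemma mp_unique:
  fixes M X Y :: "real mat"
  assumes M: "M \<in> carrier_mat r c" and X: "X \<in> carrier_mat c r" and Y: "Y \<in> carrier_mat c r"
    and cX: "mp_cond M X" and cY: "mp_cond M Y"
  shows "X = Y"
proof -
  have tM: "transpose_mat M \<in> carrier_mat c r" using M by simp
  have tX: "transpose_mat X \<in> carrier_mat r c" using X by simp
  have tY: "transpose_mat Y \<in> carrier_mat r c" using Y by simp
  note c = cX[unfolded mp_cond_def] cY[unfolded mp_cond_def]
  have cX1: "M * X * M = M" and cX2: "X * M * X = X" and cX3: "transpose_mat (M * X) = M * X"
    and cX4: "transpose_mat (X * M) = X * M" using cX unfolding mp_cond_def by auto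
  have cY1: "M * Y * M = M" and cY2: "Y * M * Y = Y" and cY3: "transpose_mat (M * Y) = M * Y"
    and cY4: "transpose_mat (Y * M) = Y * M" using cY unfolding mp_cond_def by auto
  have MX: "M * X \<in> carrier_mat r r" "M * Y \<in> carrier_mat r r"
    "X * M \<in> carrier_mat c c" "Y * M \<in> carrier_mat c c" using M X Y by auto
  have MM: "M * X = M * Y"
  proof -
    have "M * X * (M * Y) = (M * X * M) * Y" by (metis M X Y assoc_mult_mat mult_carrier_mat)
    hence a: "M * X * (M * Y) = M * Y" by (simp only: cX1)
    have "M * Y * (M * X) = (M * Y * M) * X" by (metis M X Y assoc_mult_mat mult_carrier_mat)
    hence b: "M * Y * (M * X) = M * X" by (simp only: cY1)
    have "transpose_mat (M * X * (M * Y)) = transpose_mat (M * Y) * transpose_mat (M * X)"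
      by (rule transpose_mult[of _ r r _ r]) (use M X Y in auto)
    hence "M * Y = M * Y * (M * X)" by (simp only: a cX3 cY3)
    thus ?thesis using b by simp
  qed
  have XM: "X * M = Y * M"
  proof -
    have "X * M * (Y * M) = X * (M * Y * M)" by (metis M X Y assoc_mult_mat mult_carrier_mat)
    hence a: "X * M * (Y * M) = X * M" by (simp only: cY1)
    have "Y * M * (X * M) = Y * (M * X * M)" by (metis M X Y assoc_mult_mat mult_carrier_mat)
    hence b: "Y * M * (X * M) = Y * M" by (simp only: cX1)
    have "transpose_mat (X * M * (Y * M)) = transpose_mat (Y * M) * transpose_mat (X * M)"
      by (rule transpose_mult[of _ c c _ c]) (use M X Y in auto)
    hence "X * M = Y * M * (X * M)" by (simp only: a cX4 cY4)
    thus ?thesis using b by simp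
  qed
  have "X = X * M * X" using cX2 by simp
  also have "\<dots> = X * (M * Y)" using M X Y MM by simp
  also have "\<dots> = X * M * Y" by (metis M X Y assoc_mult_mat mult_carrier_mat)
  also have "\<dots> = Y * M * Y" using XM by simp
  also have "\<dots> = Y" using cY2 by simp
  finally show ?thesis .
qed

lemma mp_exists:
  fixes M :: "real mat"
  assumes M: "M \<in> carrier_mat r c"
    and inj: "\<And>v. v \<in> carrier_vec c \<Longrightarrow> M *\<^sub>v v = 0\<^sub>v r \<Longrightarrow> v = 0\<^sub>v c"
  shows "\<exists>X \<in> carrier_mat c r. mp_cond M X \<and> X * M = 1\<^sub>m c"
proof -
  define K where "K = transpose_mat M * M"
  have tM: "transpose_mat M \<in> carrier_mat c r" using M by simp
  have K: "K \<in> carrier_mat c c" using M unfolding K_def by simp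
  have Kinj: "v = 0\<^sub>v c" if v: "v \<in> carrier_vec c" and Kv: "K *\<^sub>v v = 0\<^sub>v c" for v
  proof -
    have Mv: "M *\<^sub>v v \<in> carrier_vec r" using M v by simp
    have "(transpose_mat M *\<^sub>v (M *\<^sub>v v)) \<bullet> v = (M *\<^sub>v v) \<bullet> (M *\<^sub>v v)"
      by (rule transpose_vec_mult_scalar[OF M v Mv])
    moreover have "transpose_mat M *\<^sub>v (M *\<^sub>v v) = K *\<^sub>v v"
      unfolding K_def using M tM v by simp
    ultimately have "(M *\<^sub>v v) \<bullet> (M *\<^sub>v v) = 0" using Kv v by simp
    hence "M *\<^sub>v v = 0\<^sub>v r" using self_sprod_zero Mv by blast
    thus ?thesis using inj v by blast
  qed
  obtain Ki where Ki: "Ki \<in> carrier_mat c c" and KKi: "K * Ki = 1\<^sub>m c" and KiK: "Ki * K = 1\<^sub>m c"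
    using sq_inv_exists[OF K Kinj] by blast
  have Ksym: "transpose_mat K = K"
    unfolding K_def using transpose_mult[OF tM M] by simp
  have tKi: "transpose_mat Ki \<in> carrier_mat c c" using Ki by simp
  have "transpose_mat Ki * K = transpose_mat (K * Ki)"
    using transpose_mult[OF K Ki] Ksym by simp
  hence tKiK: "transpose_mat Ki * K = 1\<^sub>m c" using KKi by simp
  have "transpose_mat Ki = transpose_mat Ki * (K * Ki)" using KKi tKi by simp
  also have "\<dots> = (transpose_mat Ki * K) * Ki" using tKi K Ki by simp
  finally have Kisym: "transpose_mat Ki = Ki" using tKiK Ki by simp
  define X where "X = Ki * transpose_mat M"
  have X: "X \<in> carrier_mat c r" unfolding X_def using Ki tM by simp
  have XM: "X * M = 1\<^sub>m c" unfolding X_def using Ki tM M KiK K_def by simp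
  have c1: "M * X * M = M" using XM M X by (metis assoc_mult_mat right_mult_one_mat)
  have c2: "X * M * X = X" using XM X by simp
  have "transpose_mat (M * X) = transpose_mat X * transpose_mat M"
    using transpose_mult[OF M X] .
  also have "transpose_mat X = M * transpose_mat Ki"
    unfolding X_def using transpose_mult[OF Ki tM] by simp
  finally have c3: "transpose_mat (M * X) = M * X"
    unfolding X_def using Kisym M Ki tM by simp
  have c4: "transpose_mat (X * M) = X * M" using XM by simp
  show ?thesis using X XM c1 c2 c3 c4 unfolding mp_cond_def by blast
qed


definition tm :: "nat \<Rightarrow> nat \<Rightarrow> rmat \<Rightarrow> real mat" where
  "tm r c A = mat r c (\<lambda>(i,j). A i j)"

lemma tm_carrier[simp]: "tm r c A \<in> carrier_mat r c"
  unfolding tm_def by simp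

lemma tm_index[simp]: "i < r \<Longrightarrow> j < c \<Longrightarrow> tm r c A $$ (i,j) = A i j"
  "dim_row (tm r c A) = r" "dim_col (tm r c A) = c"
  unfolding tm_def by auto

lemma tm_mmul: "tm r c (mmul A k B) = tm r k A * tm k c B"
  by (rule eq_matI) (auto simp: mmul_def scalar_prod_def atLeast0LessThan intro!: sum.cong)

lemma tm_eq: "tm r c A = tm r c B \<longleftrightarrow> (\<forall>i<r. \<forall>j<c. A i j = B i j)"
proof
  assume "tm r c A = tm r c B"
  thus "\<forall>i<r. \<forall>j<c. A i j = B i j" by (metis tm_index(1))
qed (intro eq_matI, auto)

lemma tm_sym: "transpose_mat (tm r r A) = tm r r A \<longleftrightarrow> (\<forall>i<r. \<forall>j<r. A i j = A j i)"
proof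
  assume "transpose_mat (tm r r A) = tm r r A"
  thus "\<forall>i<r. \<forall>j<r. A i j = A j i" by (metis tm_index index_transpose_mat(1))
qed (intro eq_matI, auto)

lemma supported_tm_eq: "supported r c A \<Longrightarrow> supported r c B \<Longrightarrow> tm r c A = tm r c B \<Longrightarrow> A = B"
  unfolding supported_def tm_eq by (intro ext) (metis not_le)

lemma pinv_left:
  assumes inj_r: "\<And>v. (\<forall>i<r. (\<Sum>k<c. M i k * v k) = 0) \<Longrightarrow> (\<forall>k<c. v k = 0)"
  shows "\<forall>k<c. \<forall>l<c. mmul (pinv r c M) r M k l = (if k = l then 1 else 0)"
proof -
  let ?Q = "\<lambda>X. supported c r X
      \<and> (\<forall>i<r. \<forall>j<c. mmul (mmul M c X) r M i j = M i j)
      \<and> (\<forall>i<c. \<forall>j<r. mmul (mmul X r M) c X i j = X i j)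
      \<and> (\<forall>i<r. \<forall>j<r. mmul M c X i j = mmul M c X j i)
      \<and> (\<forall>i<c. \<forall>j<c. mmul X r M i j = mmul X r M j i)"
  have Qiff: "?Q X \<longleftrightarrow> supported c r X \<and> mp_cond (tm r c M) (tm c r X)" for X
    unfolding mp_cond_def tm_mmul[symmetric] tm_eq tm_sym by auto
  have injM: "v = 0\<^sub>v c" if v: "v \<in> carrier_vec c" and Mv: "tm r c M *\<^sub>v v = 0\<^sub>v r" for v
  proof -
    have "\<forall>i<r. (\<Sum>k<c. M i k * v $ k) = 0"
    proof (intro allI impI)
      fix i assume i: "i < r"
      have "(tm r c M *\<^sub>v v) $ i = 0" using Mv i by simp
      thus "(\<Sum>k<c. M i k * v $ k) = 0" using i v
        by (simp add: scalar_prod_def atLeast0LessThan)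
    qed
    hence "\<forall>k<c. v $ k = 0" by (rule inj_r)
    thus ?thesis using v by (intro eq_vecI) auto
  qed
  obtain X0 where X0: "X0 \<in> carrier_mat c r" and cX0: "mp_cond (tm r c M) X0"
    and X0M: "X0 * tm r c M = 1\<^sub>m c"
    using mp_exists[OF tm_carrier injM] by blast
  define Xf where "Xf = (\<lambda>i j. if i < c \<and> j < r then X0 $$ (i,j) else 0)"
  have sXf: "supported c r Xf" unfolding supported_def Xf_def by auto
  have tXf: "tm c r Xf = X0" using X0 by (intro eq_matI) (auto simp: Xf_def)
  have QXf: "?Q Xf" unfolding Qiff using sXf tXf cX0 by simp
  have uniq: "Y = Xf" if "?Q Y" for Y
  proof -
    have "supported c r Y" "mp_cond (tm r c M) (tm c r Y)" using that Qiff by auto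
    hence "tm c r Y = X0" using mp_unique[OF tm_carrier tm_carrier X0] cX0 by blast
    thus ?thesis using supported_tm_eq[OF \<open>supported c r Y\<close> sXf] tXf by simp
  qed
  have "pinv r c M = Xf" unfolding pinv_def
  proof (rule the1_equality)
    show "\<exists>!X. ?Q X" by (rule ex1I[of _ Xf], rule QXf, erule uniq)
  qed (rule QXf)
  hence "tm c c (mmul (pinv r c M) r M) = 1\<^sub>m c" using tm_mmul tXf X0M by metis
  thus ?thesis by (metis index_one_mat(1) tm_index(1))
qed





lemma tm_one: "tm N N A = 1\<^sub>m N \<longleftrightarrow> (\<forall>i<N. \<forall>j<N. A i j = (if i = j then 1 else 0))"
proof
  assume "tm N N A = 1\<^sub>m N"
  thus "\<forall>i<N. \<forall>j<N. A i j = (if i = j then 1 else 0)" by (metis tm_index(1) index_one_mat(1))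
qed (intro eq_matI, auto)

lemma mat_inv_props:
  assumes "mat_invertible N F"
  shows "supported N N (mat_inv N F) \<and> (\<forall>i<N. \<forall>j<N.
      mmul F N (mat_inv N F) i j = (if i = j then 1 else 0) \<and> mmul (mat_inv N F) N F i j = (if i = j then 1 else 0))"
proof -
  let ?Q = "\<lambda>B. supported N N B \<and> (\<forall>i<N. \<forall>j<N.
      mmul F N B i j = (if i = j then 1 else 0) \<and> mmul B N F i j = (if i = j then 1 else 0))"
  have Qiff: "?Q B \<longleftrightarrow> supported N N B \<and> tm N N F * tm N N B = 1\<^sub>m N \<and> tm N N B * tm N N F = 1\<^sub>m N" for B
    unfolding tm_mmul[symmetric] tm_one by blast
  obtain B0 where B0: "tm N N F * tm N N B0 = 1\<^sub>m N \<and> tm N N B0 * tm N N F = 1\<^sub>m N"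
    using assms unfolding mat_invertible_def tm_mmul[symmetric] tm_one by blast
  define Bs where "Bs = (\<lambda>i j. if i < N \<and> j < N then B0 i j else 0)"
  have sBs: "supported N N Bs" unfolding supported_def Bs_def by auto
  have tBs: "tm N N Bs = tm N N B0" unfolding tm_eq Bs_def by auto
  have QBs: "?Q Bs" unfolding Qiff using sBs tBs B0 by simp
  have uniq: "B = Bs" if "?Q B" for B
  proof -
    have sB: "supported N N B" and BF: "tm N N B * tm N N F = 1\<^sub>m N" using that Qiff by auto
    have "tm N N B = tm N N B * (tm N N F * tm N N B0)" using B0 by simp
    also have "\<dots> = (tm N N B * tm N N F) * tm N N B0" by (metis assoc_mult_mat tm_carrier)
    finally have "tm N N B = tm N N Bs" using BF tBs by simp
    thus ?thesis using supported_tm_eq[OF sB sBs] by simp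
  qed
  have "mat_inv N F = Bs" unfolding mat_inv_def
  proof (rule the1_equality)
    show "\<exists>!B. ?Q B" by (rule ex1I[of _ Bs], rule QBs, erule uniq)
  qed (rule QBs)
  thus ?thesis using QBs by simp
qed

lemma sum_delta_real: "i < (N::nat) \<Longrightarrow> (\<Sum>l<N. (if i = l then 1 else 0) * (z l::real)) = z i"
proof -
  assume i: "i < N"
  have "(\<Sum>l<N. (if i = l then 1 else 0) * z l) = (\<Sum>l<N. if i = l then z l else 0)"
    by (intro sum.cong) auto
  also have "\<dots> = z i" using i by simp
  finally show ?thesis .
qed

lemma solve_rep:
  assumes BF: "\<forall>i<N. \<forall>j<N. mmul B N F i j = (if i = j then 1 else 0)"
    and sys: "\<forall>i<N. (\<Sum>j<N. F i j * z j) = b i" and i: "i < N"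
  shows "z i = (\<Sum>j<N. B i j * b j)"
proof -
  have "(\<Sum>j<N. B i j * b j) = (\<Sum>j<N. B i j * (\<Sum>l<N. F j l * z l))"
    using sys by simp
  also have "\<dots> = (\<Sum>j<N. \<Sum>l<N. B i j * F j l * z l)"
    by (simp add: sum_distrib_left mult.assoc)
  also have "\<dots> = (\<Sum>l<N. \<Sum>j<N. B i j * F j l * z l)" by (rule sum.swap)
  also have "\<dots> = (\<Sum>l<N. (\<Sum>j<N. B i j * F j l) * z l)"
    by (simp add: sum_distrib_right)
  also have "\<dots> = (\<Sum>l<N. (if i = l then 1 else 0) * z l)"
    using BF i by (intro sum.cong) (auto simp: mmul_def)
  also have "\<dots> = z i" using i by (rule sum_delta_real)
  finally show ?thesis by simp
qed

lemma solve_the: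
  assumes sB: "supported N N B"
    and FB: "\<forall>i<N. \<forall>j<N. mmul F N B i j = (if i = j then 1 else 0)"
    and BF: "\<forall>i<N. \<forall>j<N. mmul B N F i j = (if i = j then 1 else 0)"
  shows "\<forall>i<N. (\<Sum>j<N. F i j * (THE z. (\<forall>i. N \<le> i \<longrightarrow> z i = 0) \<and>
            (\<forall>i<N. (\<Sum>j<N. F i j * z j) = b i)) j) = b i"
proof -
  let ?Q = "\<lambda>z. (\<forall>i. N \<le> i \<longrightarrow> z i = 0) \<and> (\<forall>i<N. (\<Sum>j<N. F i j * z j) = b i)"
  define z0 where "z0 = (\<lambda>i. \<Sum>j<N. B i j * b j)"
  have "?Q z0"
  proof
    show "\<forall>i. N \<le> i \<longrightarrow> z0 i = 0" using sB unfolding supported_def z0_def by auto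
    show "\<forall>i<N. (\<Sum>j<N. F i j * z0 j) = b i"
    proof (intro allI impI)
      fix i assume i: "i < N"
      have "(\<Sum>j<N. F i j * z0 j) = (\<Sum>j<N. \<Sum>l<N. F i j * B j l * b l)"
        unfolding z0_def by (simp add: sum_distrib_left mult.assoc)
      also have "\<dots> = (\<Sum>l<N. \<Sum>j<N. F i j * B j l * b l)" by (rule sum.swap)
      also have "\<dots> = (\<Sum>l<N. (\<Sum>j<N. F i j * B j l) * b l)"
        by (simp add: sum_distrib_right)
      also have "\<dots> = (\<Sum>l<N. (if i = l then 1 else 0) * b l)"
        using FB i by (intro sum.cong) (auto simp: mmul_def)
      also have "\<dots> = b i" using i by (rule sum_delta_real)
      finally show "(\<Sum>j<N. F i j * z0 j) = b i" .
    qed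
  qed
  moreover have uq: "z = z0" if zq: "?Q z" for z
  proof
    fix i show "z i = z0 i"
    proof (cases "i < N")
      case True thus ?thesis using solve_rep[OF BF] that unfolding z0_def by blast
    next
      case False
      hence "z i = 0" "z0 i = 0" using zq \<open>?Q z0\<close> by (meson not_le)+
      thus ?thesis by simp
    qed
  qed
  ultimately have "?Q (THE z. ?Q z)" by (rule theI[of ?Q z0])
  thus ?thesis by blast
qed



lemma coord_bij: "bij_betw (coord :: nat \<Rightarrow> 'n::finite) {..<CARD('n)} UNIV"
proof -
  have "\<exists>e. bij_betw e {..<CARD('n)} (UNIV :: 'n set)"
    using ex_bij_betw_nat_finite[of "UNIV :: 'n set"] by (auto simp: atLeast0LessThan)
  thus ?thesis unfolding coord_def by (rule someI_ex)
qed

lemma coord_idx_lt: "coord_idx (k :: 'n::finite) < CARD('n)"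
  unfolding coord_idx_def using coord_bij[where 'n='n]
  by (metis UNIV_I bij_betw_def inv_into_into lessThan_iff)

lemma coord_coord_idx[simp]: "coord (coord_idx (k :: 'n::finite)) = k"
  unfolding coord_idx_def using coord_bij[where 'n='n]
  by (metis UNIV_I bij_betw_inv_into_right)

lemma coord_idx_coord[simp]: "i < CARD('n) \<Longrightarrow> coord_idx (coord i :: 'n::finite) = i"
  unfolding coord_idx_def using coord_bij[where 'n='n]
  by (metis bij_betw_inv_into_left lessThan_iff)

lemma sum_coord: "(\<Sum>k<CARD('n). g (coord k :: 'n::finite)) = (\<Sum>k\<in>UNIV. g k)"
  using sum.reindex_bij_betw[OF coord_bij[where 'n='n], of g] by simp

lemma taylor_bound:
  fixes f :: "real^'n \<Rightarrow> real" and gradf :: "real^'n \<Rightarrow> real^'n"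
  assumes deriv: "\<And>u. (f has_derivative (\<lambda>h. gradf u \<bullet> h)) (at u)"
    and lip: "\<And>u v. norm (gradf u - gradf v) \<le> L * norm (u - v)"
  shows "\<bar>f v - f u - gradf u \<bullet> (v - u)\<bar> \<le> L / 2 * (norm (v - u))^2"
proof -
  define h where "h = v - u"
  define g where "g t = f (u + t *\<^sub>R h)" for t :: real
  have gd: "(g has_real_derivative (gradf (u + t *\<^sub>R h) \<bullet> h)) (at t)" for t
  proof -
    have 1: "((\<lambda>t. u + t *\<^sub>R h) has_derivative (\<lambda>s. s *\<^sub>R h)) (at t)"
      by (auto intro!: derivative_eq_intros)
    have "((f \<circ> (\<lambda>t. u + t *\<^sub>R h)) has_derivative ((\<lambda>k. gradf (u + t *\<^sub>R h) \<bullet> k) \<circ> (\<lambda>s. s *\<^sub>R h))) (at t)"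
      by (rule diff_chain_at[OF 1 deriv])
    moreover have "((\<lambda>k. gradf (u + t *\<^sub>R h) \<bullet> k) \<circ> (\<lambda>s. s *\<^sub>R h)) = (\<lambda>s. (gradf (u + t *\<^sub>R h) \<bullet> h) * s)"
      by (rule ext) (simp add: o_def mult.commute)
    ultimately show ?thesis unfolding g_def has_field_derivative_def o_def by simp
  qed
  have gt: "\<bar>gradf (u + t *\<^sub>R h) \<bullet> h - gradf u \<bullet> h\<bar> \<le> L * t * (norm h)^2" if "0 \<le> t" for t
  proof -
    have "\<bar>gradf (u + t *\<^sub>R h) \<bullet> h - gradf u \<bullet> h\<bar> = \<bar>(gradf (u + t *\<^sub>R h) - gradf u) \<bullet> h\<bar>"
      by (simp add: inner_diff_left)
    also have "\<dots> \<le> norm (gradf (u + t *\<^sub>R h) - gradf u) * norm h" by (rule Cauchy_Schwarz_ineq2)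
    also have "\<dots> \<le> (L * norm (t *\<^sub>R h)) * norm h"
      using lip[of "u + t *\<^sub>R h" u] by (intro mult_right_mono) auto
    also have "\<dots> = L * t * (norm h)^2" using that by (simp add: power2_eq_square)
    finally show ?thesis .
  qed
  define \<phi> where "\<phi> t = g t - g 0 - t * (gradf u \<bullet> h) - L / 2 * t^2 * (norm h)^2" for t
  define \<psi> where "\<psi> t = g t - g 0 - t * (gradf u \<bullet> h) + L / 2 * t^2 * (norm h)^2" for t
  have d\<phi>: "DERIV \<phi> t :> (gradf (u + t *\<^sub>R h) \<bullet> h - gradf u \<bullet> h - L * t * (norm h)^2)" for t
    unfolding \<phi>_def by (auto intro!: derivative_eq_intros gd)
  have d\<psi>: "DERIV \<psi> t :> (gradf (u + t *\<^sub>R h) \<bullet> h - gradf u \<bullet> h + L * t * (norm h)^2)" for t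
    unfolding \<psi>_def by (auto intro!: derivative_eq_intros gd)
  have "\<phi> 1 \<le> \<phi> 0"
    by (rule DERIV_nonpos_imp_nonincreasing[of 0 1]) (use d\<phi> gt in \<open>force\<close>)+
  moreover have "\<psi> 0 \<le> \<psi> 1"
    by (rule DERIV_nonneg_imp_nondecreasing[of 0 1]) (use d\<psi> gt in \<open>force\<close>)+
  moreover have "g 1 = f v" "g 0 = f u" unfolding g_def h_def by auto
  ultimately have "f v - f u - gradf u \<bullet> (v - u) \<le> L / 2 * (norm (v - u))^2"
    "-(L / 2 * (norm (v - u))^2) \<le> f v - f u - gradf u \<bullet> (v - u)"
    unfolding \<phi>_def \<psi>_def h_def by simp_all
  thus ?thesis by (simp only: abs_le_iff) (simp; linarith)
qed

lemma norm_le_sqrt_card: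
  fixes v :: "real^'n"
  assumes "\<And>k. \<bar>v $ k\<bar> \<le> m"
  shows "norm v \<le> sqrt (real CARD('n)) * m"
proof -
  have m: "0 \<le> m" using assms[of undefined] by simp
  have "(\<Sum>k\<in>UNIV. (v $ k)^2) \<le> (\<Sum>k\<in>(UNIV::'n set). m^2)"
    using assms m by (intro sum_mono) (metis abs_le_square_iff abs_of_nonneg)
  hence "(\<Sum>k\<in>UNIV. (v $ k)^2) \<le> real CARD('n) * m^2" by simp
  hence "sqrt (\<Sum>k\<in>UNIV. (v $ k)^2) \<le> sqrt (real CARD('n) * m^2)" by (rule real_sqrt_le_mono)
  also have "\<dots> = sqrt (real CARD('n)) * m" using m by (simp add: real_sqrt_mult)
  finally show ?thesis by (simp add: norm_vec_def L2_set_def)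
qed



no_notation Matrix.vec_index (infixl "$" 100)
no_notation Matrix.scalar_prod (infix "\<bullet>" 70)

lemma sum_split: "(\<Sum>j<p + (c::nat). h j) = (\<Sum>j<p. h j) + (\<Sum>k<c. h (p + k))"
  by (induction c) (auto simp: add.assoc)

lemma F_top_left: "i < p \<Longrightarrow> j < p \<Longrightarrow> Fhat x \<Delta> y p i j = (1/2) * (shat x \<Delta> y i \<bullet> shat x \<Delta> y j)^2"
  unfolding Fhat_def Phat_def by simp

lemma F_top_right: "i < p \<Longrightarrow> k < CARD('n) + 1 \<Longrightarrow> Fhat x \<Delta> y p i (p + k) = Mhat x \<Delta> y p i k"
  for x :: "real^'n" unfolding Fhat_def by simp

lemma F_bot_right: "p \<le> i \<Longrightarrow> Fhat x \<Delta> y p i (p + k) = 0"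
  for x :: "real^'n" unfolding Fhat_def by simp

lemma M_0: "i < p \<Longrightarrow> Mhat x \<Delta> y p i 0 = 1"
  unfolding Mhat_def by simp

lemma M_Suc: "i < p \<Longrightarrow> k < CARD('n) \<Longrightarrow> Mhat x \<Delta> y p i (Suc k) = shat x \<Delta> y i $ coord k"
  for x :: "real^'n" unfolding Mhat_def by simp

lemma row_top':
  fixes x :: "real^'n"
  assumes i: "i < p"
  shows "(\<Sum>j<p + CARD('n) + 1. Fhat x \<Delta> y p i j * w j)
    = (\<Sum>j<p. Fhat x \<Delta> y p i j * w j) + (\<Sum>k<CARD('n) + 1. Mhat x \<Delta> y p i k * w (p + k))"
proof -
  have "(\<Sum>j<p + CARD('n) + 1. Fhat x \<Delta> y p i j * w j) = (\<Sum>j<p + (CARD('n) + 1). Fhat x \<Delta> y p i j * w j)"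
    by (simp add: add.assoc)
  also have "\<dots> = (\<Sum>j<p. Fhat x \<Delta> y p i j * w j) + (\<Sum>k<CARD('n) + 1. Fhat x \<Delta> y p i (p + k) * w (p + k))"
    by (rule sum_split)
  also have "(\<Sum>k<CARD('n) + 1. Fhat x \<Delta> y p i (p + k) * w (p + k)) = (\<Sum>k<CARD('n) + 1. Mhat x \<Delta> y p i k * w (p + k))"
    using i by (intro sum.cong) (auto simp: F_top_right)
  finally show ?thesis .
qed

lemma row_top:
  fixes x :: "real^'n"
  assumes i: "i < p"
  shows "(\<Sum>j<p + CARD('n) + 1. Fhat x \<Delta> y p i j * w j)
    = (\<Sum>j<p. (1/2) * (shat x \<Delta> y i \<bullet> shat x \<Delta> y j)^2 * w j) + w p
      + (\<Sum>k<CARD('n). shat x \<Delta> y i $ coord k * w (p + 1 + k))"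
proof -
  have "(\<Sum>k<CARD('n) + 1. Mhat x \<Delta> y p i k * w (p + k))
      = Mhat x \<Delta> y p i 0 * w (p + 0) + (\<Sum>k<CARD('n). Mhat x \<Delta> y p i (Suc k) * w (p + Suc k))"
    by (simp only: Suc_eq_plus1[symmetric] sum.lessThan_Suc_shift)
  also have "\<dots> = w p + (\<Sum>k<CARD('n). shat x \<Delta> y i $ coord k * w (p + 1 + k))"
    using i by (simp add: M_0 M_Suc)
  finally show ?thesis unfolding row_top'[OF i] using i by (simp add: F_top_left)
qed

lemma row_bot:
  fixes x :: "real^'n"
  assumes i: "p \<le> i" and w: "\<And>j. j < p \<Longrightarrow> w j = 0"
  shows "(\<Sum>j<p + CARD('n) + 1. Fhat x \<Delta> y p i j * w j) = 0"
proof -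
  have "(\<Sum>j<p + CARD('n) + 1. Fhat x \<Delta> y p i j * w j) = (\<Sum>j<p + (CARD('n) + 1). Fhat x \<Delta> y p i j * w j)"
    by (simp add: add.assoc)
  also have "\<dots> = (\<Sum>j<p. Fhat x \<Delta> y p i j * w j) + (\<Sum>k<CARD('n) + 1. Fhat x \<Delta> y p i (p + k) * w (p + k))"
    by (rule sum_split)
  also have "\<dots> = 0" using i w by (simp add: F_bot_right)
  finally show ?thesis .
qed

lemma g_inner:
  fixes x :: "real^'n"
  shows "model_g f x \<Delta> y p \<bullet> v = (\<Sum>k<CARD('n). model_sol f x \<Delta> y p (p + 1 + k) / \<Delta> * v $ coord k)"
proof -
  have "model_g f x \<Delta> y p \<bullet> v = (\<Sum>k\<in>UNIV. model_g f x \<Delta> y p $ k * v $ k)"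
    by (simp add: inner_vec_def)
  also have "\<dots> = (\<Sum>k<CARD('n). model_g f x \<Delta> y p $ coord k * v $ coord k)"
    by (rule sum_coord[symmetric])
  also have "\<dots> = (\<Sum>k<CARD('n). model_sol f x \<Delta> y p (p + 1 + k) / \<Delta> * v $ coord k)"
    by (intro sum.cong) (auto simp: model_g_def)
  finally show ?thesis .
qed

lemma H_apply:
  fixes x :: "real^'n"
  shows "model_H f x \<Delta> y p *v v
    = (\<Sum>j<p. (model_sol f x \<Delta> y p j / \<Delta>^4 * ((y j - x) \<bullet> v)) *\<^sub>R (y j - x))"
proof -
  let ?l = "\<lambda>j. model_sol f x \<Delta> y p j / \<Delta>^4"
  show ?thesis
  proof (subst Finite_Cartesian_Product.vec_eq_iff, intro allI)
    fix a
    have "(model_H f x \<Delta> y p *v v) $ a = (\<Sum>b\<in>UNIV. (\<Sum>j<p. ?l j * (y j - x) $ a * (y j - x) $ b) * v $ b)"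
      by (simp add: matrix_vector_mult_def model_H_def)
    also have "\<dots> = (\<Sum>b\<in>UNIV. \<Sum>j<p. ?l j * (y j - x) $ a * (y j - x) $ b * v $ b)"
      by (simp add: sum_distrib_right)
    also have "\<dots> = (\<Sum>j<p. \<Sum>b\<in>UNIV. ?l j * (y j - x) $ a * (y j - x) $ b * v $ b)"
      by (rule sum.swap)
    also have "\<dots> = (\<Sum>j<p. (?l j * ((y j - x) \<bullet> v)) * (y j - x) $ a)"
      by (intro sum.cong) (auto simp: inner_vec_def sum_distrib_left sum_distrib_right mult_ac)
    also have "\<dots> = (\<Sum>j<p. (?l j * ((y j - x) \<bullet> v)) *\<^sub>R (y j - x)) $ a"
      by (simp add: sum_component)
    finally show "(model_H f x \<Delta> y p *v v) $ a = (\<Sum>j<p. (?l j * ((y j - x) \<bullet> v)) *\<^sub>R (y j - x)) $ a" .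
  qed
qed



context
  fixes f :: "real^'n \<Rightarrow> real" and gradf :: "real^'n \<Rightarrow> real^'n"
    and L \<Delta> \<beta> :: real and x :: "real^'n" and y :: "nat \<Rightarrow> real^'n" and p :: nat
  assumes deriv: "\<And>u. (f has_derivative (\<lambda>h. gradf u \<bullet> h)) (at u)"
    and lip: "\<And>u v. norm (gradf u - gradf v) \<le> L * norm (u - v)"
    and Delta_pos: "\<Delta> > 0" and beta_pos: "\<beta> > 0"
    and pts: "\<And>i. i < p \<Longrightarrow> norm (y i - x) \<le> \<beta> * \<Delta>"
    and F_inv: "mat_invertible (p + CARD('n) + 1) (Fhat x \<Delta> y p)"
begin

lemma L_nonneg: "0 \<le> L"
proof (rule ccontr)
  assume "\<not> 0 \<le> L"
  hence L: "L < 0" by simp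
  obtain k :: 'n where True by simp
  have "axis k (1::real) $ k = 1" by (simp add: axis_def)
  hence ne: "axis k (1::real) \<noteq> 0" by auto
  have "0 \<le> norm (gradf (axis k 1) - gradf 0)" by simp
  also have "\<dots> \<le> L * norm (axis k (1::real) - 0)" by (rule lip)
  also have "\<dots> < 0" using L ne by (simp add: mult_neg_pos)
  finally show False by simp
qed

lemma B_props: "supported (p + CARD('n) + 1) (p + CARD('n) + 1) (mat_inv (p + CARD('n) + 1) (Fhat x \<Delta> y p)) \<and> (\<forall>i<(p + CARD('n) + 1). \<forall>j<(p + CARD('n) + 1).
      mmul (Fhat x \<Delta> y p) (p + CARD('n) + 1) (mat_inv (p + CARD('n) + 1) (Fhat x \<Delta> y p)) i j = (if i = j then 1 else 0) \<and> mmul (mat_inv (p + CARD('n) + 1) (Fhat x \<Delta> y p)) (p + CARD('n) + 1) (Fhat x \<Delta> y p) i j = (if i = j then 1 else 0))"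
  by (rule mat_inv_props[OF F_inv])

lemma BF: "\<forall>i<(p + CARD('n) + 1). \<forall>j<(p + CARD('n) + 1). mmul (mat_inv (p + CARD('n) + 1) (Fhat x \<Delta> y p)) (p + CARD('n) + 1) (Fhat x \<Delta> y p) i j = (if i = j then 1 else 0)"
  using B_props by blast

lemma z_sys: "\<forall>i<(p + CARD('n) + 1). (\<Sum>j<(p + CARD('n) + 1). Fhat x \<Delta> y p i j * (model_sol f x \<Delta> y p) j) = (if i < p then f (y i) else 0)"
  unfolding model_sol_def using B_props by (intro solve_the) auto

lemma nB_row: "i < (p + CARD('n) + 1) \<Longrightarrow> (\<Sum>j<(p + CARD('n) + 1). \<bar>(mat_inv (p + CARD('n) + 1) (Fhat x \<Delta> y p)) i j\<bar>) \<le> (mat_norm_inf (p + CARD('n) + 1) (p + CARD('n) + 1) (mat_inv (p + CARD('n) + 1) (Fhat x \<Delta> y p)))"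
  unfolding mat_norm_inf_def by (rule Max_ge, simp, rule imageI, simp)

lemma nB_nonneg: "0 \<le> (mat_norm_inf (p + CARD('n) + 1) (p + CARD('n) + 1) (mat_inv (p + CARD('n) + 1) (Fhat x \<Delta> y p)))"
proof -
  have "0 \<le> (\<Sum>j<(p + CARD('n) + 1). \<bar>(mat_inv (p + CARD('n) + 1) (Fhat x \<Delta> y p)) 0 j\<bar>)" by (simp add: sum_nonneg)
  also have "\<dots> \<le> (mat_norm_inf (p + CARD('n) + 1) (p + CARD('n) + 1) (mat_inv (p + CARD('n) + 1) (Fhat x \<Delta> y p)))" by (rule nB_row) simp
  finally show ?thesis .
qed

lemma TT_nonneg: "0 \<le> (L / 2 * (\<beta> * \<Delta>)^2)" using L_nonneg by simp

lemma taylor_pts: "j < p \<Longrightarrow> \<bar>f (y j) - f x - gradf x \<bullet> (y j - x)\<bar> \<le> (L / 2 * (\<beta> * \<Delta>)^2)"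
proof -
  assume j: "j < p"
  have "\<bar>f (y j) - f x - gradf x \<bullet> (y j - x)\<bar> \<le> L / 2 * (norm (y j - x))^2"
    by (rule taylor_bound[OF deriv lip])
  also have "\<dots> \<le> (L / 2 * (\<beta> * \<Delta>)^2)"
    using L_nonneg pts[OF j] by (intro mult_left_mono power_mono) auto
  finally show ?thesis .
qed

lemma lam_bound:
  assumes i: "i < p"
  shows "\<bar>(model_sol f x \<Delta> y p) i\<bar> \<le> (mat_norm_inf (p + CARD('n) + 1) (p + CARD('n) + 1) (mat_inv (p + CARD('n) + 1) (Fhat x \<Delta> y p))) * (L / 2 * (\<beta> * \<Delta>)^2)"
proof -
  define w where "w j = (if j = p then f x else if p < j \<and> j < (p + CARD('n) + 1) then \<Delta> * gradf x $ coord (j - p - 1) else 0)" for j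
  have w0: "w j = 0" if "j < p" for j using that unfolding w_def by simp
  have Fw: "(\<Sum>j<(p + CARD('n) + 1). Fhat x \<Delta> y p i j * w j) = (if i < p then f x + gradf x \<bullet> (y i - x) else 0)"
    if i: "i < (p + CARD('n) + 1)" for i
  proof (cases "i < p")
    case True
    have "(\<Sum>j<p. (1/2) * (shat x \<Delta> y i \<bullet> shat x \<Delta> y j)^2 * w j) = 0" by (simp add: w0)
    moreover have "(\<Sum>k<CARD('n). shat x \<Delta> y i $ coord k * w (p + 1 + k))
        = (\<Sum>k<CARD('n). gradf x $ coord k * (y i - x) $ coord k)"
      using Delta_pos by (intro sum.cong) (auto simp: w_def shat_def coord_idx_lt)
    moreover have "(\<Sum>k<CARD('n). gradf x $ coord k * (y i - x) $ coord k) = gradf x \<bullet> (y i - x)"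
      using sum_coord[of "\<lambda>k. gradf x $ k * (y i - x) $ k"] by (simp add: inner_vec_def)
    moreover have "w p = f x" unfolding w_def by simp
    ultimately show ?thesis using True row_top[OF True, where x=x and \<Delta>=\<Delta> and y=y and w=w] by simp
  next
    case False thus ?thesis using row_bot[where p=p and i=i and w=w and x=x and \<Delta>=\<Delta> and y=y] w0 by simp
  qed
  define rr where "rr j = (if j < p then f (y j) - f x - gradf x \<bullet> (y j - x) else 0)" for j
  have sys: "\<forall>i<(p + CARD('n) + 1). (\<Sum>j<(p + CARD('n) + 1). Fhat x \<Delta> y p i j * ((model_sol f x \<Delta> y p) j - w j)) = rr i"
  proof (intro allI impI)
    fix i assume i: "i < (p + CARD('n) + 1)"
    have "(\<Sum>j<(p + CARD('n) + 1). Fhat x \<Delta> y p i j * ((model_sol f x \<Delta> y p) j - w j))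
        = (\<Sum>j<(p + CARD('n) + 1). Fhat x \<Delta> y p i j * (model_sol f x \<Delta> y p) j) - (\<Sum>j<(p + CARD('n) + 1). Fhat x \<Delta> y p i j * w j)"
      by (simp add: right_diff_distrib sum_subtractf)
    thus "(\<Sum>j<(p + CARD('n) + 1). Fhat x \<Delta> y p i j * ((model_sol f x \<Delta> y p) j - w j)) = rr i"
      using z_sys i Fw[OF i] unfolding rr_def by auto
  qed
  have "(model_sol f x \<Delta> y p) i - w i = (\<Sum>j<(p + CARD('n) + 1). (mat_inv (p + CARD('n) + 1) (Fhat x \<Delta> y p)) i j * rr j)"
    by (rule solve_rep[OF BF sys]) (use i in simp)
  hence "(model_sol f x \<Delta> y p) i = (\<Sum>j<(p + CARD('n) + 1). (mat_inv (p + CARD('n) + 1) (Fhat x \<Delta> y p)) i j * rr j)" using w0[OF i] by simp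
  hence "\<bar>(model_sol f x \<Delta> y p) i\<bar> \<le> (\<Sum>j<(p + CARD('n) + 1). \<bar>(mat_inv (p + CARD('n) + 1) (Fhat x \<Delta> y p)) i j * rr j\<bar>)"
    by (simp only: sum_abs)
  also have "\<dots> = (\<Sum>j<(p + CARD('n) + 1). \<bar>(mat_inv (p + CARD('n) + 1) (Fhat x \<Delta> y p)) i j\<bar> * \<bar>rr j\<bar>)"
    by (simp only: abs_mult)
  also have "\<dots> \<le> (\<Sum>j<(p + CARD('n) + 1). \<bar>(mat_inv (p + CARD('n) + 1) (Fhat x \<Delta> y p)) i j\<bar> * (L / 2 * (\<beta> * \<Delta>)^2))"
  proof (intro sum_mono mult_left_mono)
    fix j show "\<bar>rr j\<bar> \<le> (L / 2 * (\<beta> * \<Delta>)^2)" unfolding rr_def using taylor_pts TT_nonneg by auto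
  qed simp
  also have "\<dots> = (\<Sum>j<(p + CARD('n) + 1). \<bar>(mat_inv (p + CARD('n) + 1) (Fhat x \<Delta> y p)) i j\<bar>) * (L / 2 * (\<beta> * \<Delta>)^2)" by (simp only: sum_distrib_right)
  also have "\<dots> \<le> (mat_norm_inf (p + CARD('n) + 1) (p + CARD('n) + 1) (mat_inv (p + CARD('n) + 1) (Fhat x \<Delta> y p))) * (L / 2 * (\<beta> * \<Delta>)^2)" using nB_row[of i] i TT_nonneg by (intro mult_right_mono) auto
  finally show ?thesis .
qed


lemma H_term:
  assumes j: "j < p"
  shows "\<bar>(model_sol f x \<Delta> y p) j / \<Delta>^4 * ((y j - x) \<bullet> v)\<bar> * norm (y j - x) \<le> (mat_norm_inf (p + CARD('n) + 1) (p + CARD('n) + 1) (mat_inv (p + CARD('n) + 1) (Fhat x \<Delta> y p))) * (L / 2 * \<beta>^4) * norm v"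
proof -
  have D4: "0 < \<Delta>^4" using Delta_pos by simp
  have a: "\<bar>(model_sol f x \<Delta> y p) j / \<Delta>^4\<bar> \<le> (mat_norm_inf (p + CARD('n) + 1) (p + CARD('n) + 1) (mat_inv (p + CARD('n) + 1) (Fhat x \<Delta> y p))) * (L / 2 * (\<beta> * \<Delta>)^2) / \<Delta>^4"
  proof -
    have "\<bar>(model_sol f x \<Delta> y p) j / \<Delta>^4\<bar> = \<bar>(model_sol f x \<Delta> y p) j\<bar> / \<Delta>^4" using D4 by (simp add: abs_divide)
    also have "\<dots> \<le> (mat_norm_inf (p + CARD('n) + 1) (p + CARD('n) + 1) (mat_inv (p + CARD('n) + 1) (Fhat x \<Delta> y p))) * (L / 2 * (\<beta> * \<Delta>)^2) / \<Delta>^4" by (rule divide_right_mono[OF lam_bound[OF j]]) (use D4 in simp)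
    finally show ?thesis .
  qed
  have "\<bar>(y j - x) \<bullet> v\<bar> * norm (y j - x) \<le> (norm (y j - x) * norm v) * norm (y j - x)"
    by (intro mult_right_mono Cauchy_Schwarz_ineq2) simp
  also have "\<dots> = (norm (y j - x))^2 * norm v" by (simp add: power2_eq_square)
  also have "\<dots> \<le> (\<beta> * \<Delta>)^2 * norm v"
    using pts[OF j] by (intro mult_right_mono power_mono) auto
  finally have b: "\<bar>(y j - x) \<bullet> v\<bar> * norm (y j - x) \<le> (\<beta> * \<Delta>)^2 * norm v" .
  have "\<bar>(model_sol f x \<Delta> y p) j / \<Delta>^4 * ((y j - x) \<bullet> v)\<bar> * norm (y j - x)
      = \<bar>(model_sol f x \<Delta> y p) j / \<Delta>^4\<bar> * (\<bar>(y j - x) \<bullet> v\<bar> * norm (y j - x))" by (simp add: abs_mult)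
  also have "\<dots> \<le> ((mat_norm_inf (p + CARD('n) + 1) (p + CARD('n) + 1) (mat_inv (p + CARD('n) + 1) (Fhat x \<Delta> y p))) * (L / 2 * (\<beta> * \<Delta>)^2) / \<Delta>^4) * ((\<beta> * \<Delta>)^2 * norm v)"
    by (rule mult_mono[OF a b]) (use nB_nonneg TT_nonneg D4 in simp_all)
  also have "\<dots> = (mat_norm_inf (p + CARD('n) + 1) (p + CARD('n) + 1) (mat_inv (p + CARD('n) + 1) (Fhat x \<Delta> y p))) * (L / 2 * \<beta>^4) * norm v"
    using Delta_pos by (simp add: field_simps power2_eq_square power4_eq_xxxx)
  finally show ?thesis .
qed

lemma H_norm: "norm (model_H f x \<Delta> y p *v v) \<le> (L / 2 * real p * \<beta>^4 * (mat_norm_inf (p + CARD('n) + 1) (p + CARD('n) + 1) (mat_inv (p + CARD('n) + 1) (Fhat x \<Delta> y p)))) * norm v"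
proof -
  have "norm (model_H f x \<Delta> y p *v v)
      = norm (\<Sum>j<p. ((model_sol f x \<Delta> y p) j / \<Delta>^4 * ((y j - x) \<bullet> v)) *\<^sub>R (y j - x))"
    by (simp only: H_apply)
  also have "\<dots> \<le> (\<Sum>j<p. norm (((model_sol f x \<Delta> y p) j / \<Delta>^4 * ((y j - x) \<bullet> v)) *\<^sub>R (y j - x)))"
    by (rule norm_sum)
  also have "\<dots> = (\<Sum>j<p. \<bar>(model_sol f x \<Delta> y p) j / \<Delta>^4 * ((y j - x) \<bullet> v)\<bar> * norm (y j - x))"
    by simp
  also have "\<dots> \<le> (\<Sum>j<p. (mat_norm_inf (p + CARD('n) + 1) (p + CARD('n) + 1) (mat_inv (p + CARD('n) + 1) (Fhat x \<Delta> y p))) * (L / 2 * \<beta>^4) * norm v)"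
    by (intro sum_mono H_term) simp
  also have "\<dots> = (L / 2 * real p * \<beta>^4 * (mat_norm_inf (p + CARD('n) + 1) (p + CARD('n) + 1) (mat_inv (p + CARD('n) + 1) (Fhat x \<Delta> y p)))) * norm v" by simp
  finally show ?thesis .
qed

lemma H_quad: "\<bar>v \<bullet> (model_H f x \<Delta> y p *v v)\<bar> \<le> (L / 2 * real p * \<beta>^4 * (mat_norm_inf (p + CARD('n) + 1) (p + CARD('n) + 1) (mat_inv (p + CARD('n) + 1) (Fhat x \<Delta> y p)))) * (norm v)^2"
proof -
  have "\<bar>v \<bullet> (model_H f x \<Delta> y p *v v)\<bar> \<le> norm v * norm (model_H f x \<Delta> y p *v v)"
    by (rule Cauchy_Schwarz_ineq2)
  also have "\<dots> \<le> norm v * ((L / 2 * real p * \<beta>^4 * (mat_norm_inf (p + CARD('n) + 1) (p + CARD('n) + 1) (mat_inv (p + CARD('n) + 1) (Fhat x \<Delta> y p)))) * norm v)"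
    by (intro mult_left_mono H_norm) simp
  finally show ?thesis by (simp add: power2_eq_square mult_ac)
qed

lemma interp:
  assumes i: "i < p"
  shows "model f x \<Delta> y p (y i) = f (y i)"
proof -
  let ?d = "\<lambda>j. y j - x"
  have "f (y i) = (\<Sum>j<(p + CARD('n) + 1). Fhat x \<Delta> y p i j * (model_sol f x \<Delta> y p) j)" using z_sys i by simp
  also have "\<dots> = (\<Sum>j<p. (1/2) * (shat x \<Delta> y i \<bullet> shat x \<Delta> y j)^2 * (model_sol f x \<Delta> y p) j) + (model_sol f x \<Delta> y p) p
      + (\<Sum>k<CARD('n). shat x \<Delta> y i $ coord k * (model_sol f x \<Delta> y p) (p + 1 + k))"
    by (rule row_top[OF i])
  also have "(\<Sum>k<CARD('n). shat x \<Delta> y i $ coord k * (model_sol f x \<Delta> y p) (p + 1 + k)) = model_g f x \<Delta> y p \<bullet> ?d i"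
    unfolding g_inner by (intro sum.cong) (auto simp: shat_def)
  also have "(\<Sum>j<p. (1/2) * (shat x \<Delta> y i \<bullet> shat x \<Delta> y j)^2 * (model_sol f x \<Delta> y p) j)
      = (1/2) * (?d i \<bullet> (model_H f x \<Delta> y p *v ?d i))"
  proof -
    have "(1/2) * (?d i \<bullet> (model_H f x \<Delta> y p *v ?d i))
        = (1/2) * (\<Sum>j<p. ((model_sol f x \<Delta> y p) j / \<Delta>^4 * (?d j \<bullet> ?d i)) * (?d i \<bullet> ?d j))"
      by (simp add: H_apply inner_sum_right)
    also have "\<dots> = (\<Sum>j<p. (1/2) * (shat x \<Delta> y i \<bullet> shat x \<Delta> y j)^2 * (model_sol f x \<Delta> y p) j)"
      unfolding sum_distrib_left
    proof (intro sum.cong refl)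
      fix j
      have si: "shat x \<Delta> y i \<bullet> shat x \<Delta> y j = (?d i \<bullet> ?d j) / \<Delta>^2"
        unfolding shat_def by (simp only: inner_scaleR_left inner_scaleR_right) (simp add: power2_eq_square)
      show "1 / 2 * ((model_sol f x \<Delta> y p) j / \<Delta> ^ 4 * (?d j \<bullet> ?d i) * (?d i \<bullet> ?d j))
          = 1 / 2 * (shat x \<Delta> y i \<bullet> shat x \<Delta> y j)\<^sup>2 * (model_sol f x \<Delta> y p) j"
        unfolding si using Delta_pos by (simp add: inner_commute[of "?d j"] field_simps power2_eq_square power4_eq_xxxx)
    qed
    finally show ?thesis by simp
  qed
  finally show ?thesis unfolding model_def model_c_def by simp
qed

lemma Mh_inj:
  assumes v: "\<forall>i<p. (\<Sum>k<CARD('n) + 1. Mhat x \<Delta> y p i k * v k) = 0"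
  shows "\<forall>k<CARD('n) + 1. v k = 0"
proof (intro allI impI)
  fix k assume k: "k < CARD('n) + 1"
  define w where "w j = (if p \<le> j then v (j - p) else 0)" for j
  have w0: "w j = 0" if "j < p" for j using that unfolding w_def by simp
  have sys: "\<forall>i<(p + CARD('n) + 1). (\<Sum>j<(p + CARD('n) + 1). Fhat x \<Delta> y p i j * w j) = 0"
  proof (intro allI impI)
    fix i assume i: "i < (p + CARD('n) + 1)"
    show "(\<Sum>j<(p + CARD('n) + 1). Fhat x \<Delta> y p i j * w j) = 0"
    proof (cases "i < p")
      case True
      have "(\<Sum>j<(p + CARD('n) + 1). Fhat x \<Delta> y p i j * w j)
          = (\<Sum>j<p. Fhat x \<Delta> y p i j * w j) + (\<Sum>k<CARD('n) + 1. Mhat x \<Delta> y p i k * w (p + k))"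
        by (rule row_top'[OF True])
      also have "\<dots> = 0" using v True by (simp add: w0 w_def)
      finally show ?thesis .
    next
      case False thus ?thesis using row_bot[where p=p and i=i and w=w and x=x and \<Delta>=\<Delta> and y=y] w0 by simp
    qed
  qed
  have "w (p + k) = (\<Sum>j<(p + CARD('n) + 1). (mat_inv (p + CARD('n) + 1) (Fhat x \<Delta> y p)) (p + k) j * 0)"
    by (rule solve_rep[OF BF sys]) (use k in simp)
  thus "v k = 0" unfolding w_def by simp
qed


lemma main_bound:
  fixes z :: "real^'n"
  assumes zb: "z \<in> cball x \<Delta>"
  defines "kH \<equiv> L / 2 * real p * \<beta>^4 * (mat_norm_inf (p + CARD('n) + 1) (p + CARD('n) + 1) (mat_inv (p + CARD('n) + 1) (Fhat x \<Delta> y p)))"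
  defines "nX \<equiv> mat_norm_inf (CARD('n) + 1) p (pinv p (CARD('n) + 1) (Mhat x \<Delta> y p))"
  defines "kmf \<equiv> (L + kH) / 2 * (1 + sqrt (real CARD('n))) * \<beta>^2 * nX + (L + kH) / 2"
  shows "\<bar>model f x \<Delta> y p z - f z\<bar> \<le> kmf * \<Delta>^2
       \<and> norm (model_grad f x \<Delta> y p z - gradf z) \<le> (2 * kmf + 2 * kH) * \<Delta>"
proof -
  let ?c = "CARD('n) + 1"
  let ?X = "pinv p ?c (Mhat x \<Delta> y p)"
  let ?H = "model_H f x \<Delta> y p"
  let ?d = "\<lambda>j. y j - x"
  define S where "S = sqrt (real CARD('n))"
  define R where "R = (L + kH) / 2 * (\<beta> * \<Delta>)^2"
  have S0: "0 \<le> S" unfolding S_def by simp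
  have kH0: "0 \<le> kH" unfolding kH_def using L_nonneg nB_nonneg by simp
  have R0: "0 \<le> R" unfolding R_def using L_nonneg kH0 by simp
  have Xleft: "\<forall>k<?c. \<forall>l<?c. mmul ?X p (Mhat x \<Delta> y p) k l = (if k = l then 1 else 0)"
    by (rule pinv_left) (rule Mh_inj, blast)
  have nX_row: "(\<Sum>j<p. \<bar>?X k j\<bar>) \<le> nX" if "k < ?c" for k
    unfolding nX_def mat_norm_inf_def using that by (intro Max_ge) auto
  have nX0: "0 \<le> nX"
  proof -
    have "0 \<le> (\<Sum>j<p. \<bar>?X 0 j\<bar>)" by (simp add: sum_nonneg)
    also have "\<dots> \<le> nX" by (rule nX_row) simp
    finally show ?thesis .
  qed
  define a where "a = (model_sol f x \<Delta> y p) p - f x"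
  define bv where "bv = model_g f x \<Delta> y p - gradf x"
  define u where "u k = (if k = 0 then a else \<Delta> * bv $ coord (k - 1))" for k
  define r where "r i = (1/2) * (?d i \<bullet> (?H *v ?d i)) - (f (y i) - f x - gradf x \<bullet> ?d i)" for i
  have res: "(\<Sum>k<?c. Mhat x \<Delta> y p i k * u k) = - r i" if i: "i < p" for i
  proof -
    have "(\<Sum>k<?c. Mhat x \<Delta> y p i k * u k)
        = Mhat x \<Delta> y p i 0 * u 0 + (\<Sum>k<CARD('n). Mhat x \<Delta> y p i (Suc k) * u (Suc k))"
      by (simp only: Suc_eq_plus1[symmetric] sum.lessThan_Suc_shift)
    also have "(\<Sum>k<CARD('n). Mhat x \<Delta> y p i (Suc k) * u (Suc k))
        = (\<Sum>k<CARD('n). bv $ coord k * ?d i $ coord k)"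
      using Delta_pos i by (intro sum.cong) (auto simp: M_Suc u_def shat_def)
    also have "\<dots> = bv \<bullet> ?d i"
      using sum_coord[of "\<lambda>k. bv $ k * ?d i $ k"] by (simp add: inner_vec_def)
    finally have "(\<Sum>k<?c. Mhat x \<Delta> y p i k * u k) = a + bv \<bullet> ?d i"
      using i by (simp add: M_0 u_def)
    moreover have "model f x \<Delta> y p (y i) = f (y i)" by (rule interp[OF i])
    ultimately show ?thesis
      unfolding model_def model_c_def r_def a_def bv_def by (simp add: inner_diff_left)
  qed
  have rb: "\<bar>r i\<bar> \<le> R" if i: "i < p" for i
  proof -
    have "\<bar>?d i \<bullet> (?H *v ?d i)\<bar> \<le> kH * (norm (?d i))^2" unfolding kH_def by (rule H_quad)
    also have "\<dots> \<le> kH * (\<beta> * \<Delta>)^2" using kH0 pts[OF i] by (intro mult_left_mono power_mono) auto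
    finally have 1: "\<bar>?d i \<bullet> (?H *v ?d i)\<bar> \<le> kH * (\<beta> * \<Delta>)^2" .
    have 2: "\<bar>f (y i) - f x - gradf x \<bullet> ?d i\<bar> \<le> L / 2 * (\<beta> * \<Delta>)^2" by (rule taylor_pts[OF i])
    have "\<bar>r i\<bar> \<le> \<bar>(1/2) * (?d i \<bullet> (?H *v ?d i))\<bar> + \<bar>f (y i) - f x - gradf x \<bullet> ?d i\<bar>"
      unfolding r_def by (rule abs_triangle_ineq4)
    also have "\<dots> \<le> kH * (\<beta> * \<Delta>)^2 / 2 + L / 2 * (\<beta> * \<Delta>)^2" using 1 2 by simp
    also have "\<dots> = R" unfolding R_def by (simp add: field_simps)
    finally show ?thesis .
  qed
  have ub: "\<bar>u k\<bar> \<le> nX * R" if k: "k < ?c" for k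
  proof -
    have "u k = (\<Sum>l<?c. (if k = l then 1 else 0) * u l)" using k by (simp only: sum_delta_real)
    also have "\<dots> = (\<Sum>l<?c. (\<Sum>j<p. ?X k j * Mhat x \<Delta> y p j l) * u l)"
      using Xleft k by (intro sum.cong refl) (simp add: mmul_def)
    also have "\<dots> = (\<Sum>l<?c. \<Sum>j<p. ?X k j * Mhat x \<Delta> y p j l * u l)"
      by (simp only: sum_distrib_right)
    also have "\<dots> = (\<Sum>j<p. \<Sum>l<?c. ?X k j * Mhat x \<Delta> y p j l * u l)" by (rule sum.swap)
    also have "\<dots> = (\<Sum>j<p. ?X k j * (\<Sum>l<?c. Mhat x \<Delta> y p j l * u l))"
      by (simp only: sum_distrib_left mult.assoc)
    also have "\<dots> = (\<Sum>j<p. ?X k j * (- r j))"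
    proof (intro sum.cong refl)
      fix j assume "j \<in> {..<p}"
      thus "?X k j * (\<Sum>l<?c. Mhat x \<Delta> y p j l * u l) = ?X k j * (- r j)" using res[of j] by simp
    qed
    finally have "\<bar>u k\<bar> = \<bar>\<Sum>j<p. ?X k j * (- r j)\<bar>" by simp
    also have "\<dots> \<le> (\<Sum>j<p. \<bar>?X k j * (- r j)\<bar>)" by (rule sum_abs)
    also have "\<dots> = (\<Sum>j<p. \<bar>?X k j\<bar> * \<bar>r j\<bar>)" by (simp add: abs_mult)
    also have "\<dots> \<le> (\<Sum>j<p. \<bar>?X k j\<bar> * R)" by (intro sum_mono mult_left_mono rb) auto
    also have "\<dots> = (\<Sum>j<p. \<bar>?X k j\<bar>) * R" by (simp only: sum_distrib_right)
    also have "\<dots> \<le> nX * R" using nX_row[OF k] R0 by (rule mult_right_mono)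
    finally show ?thesis .
  qed
  have ab: "\<bar>a\<bar> \<le> nX * R" using ub[of 0] by (simp add: u_def)
  have bc: "\<bar>bv $ k\<bar> \<le> nX * R / \<Delta>" for k
  proof -
    have "\<bar>u (Suc (coord_idx k))\<bar> \<le> nX * R" using ub coord_idx_lt[of k] by simp
    hence "\<Delta> * \<bar>bv $ k\<bar> \<le> nX * R" using Delta_pos by (simp add: u_def abs_mult)
    thus ?thesis using Delta_pos by (simp add: field_simps)
  qed
  have bn: "norm bv \<le> S * (nX * R / \<Delta>)" unfolding S_def by (rule norm_le_sqrt_card[OF bc])
  define h where "h = z - x"
  have hn: "norm h \<le> \<Delta>" using zb unfolding h_def by (simp add: dist_norm norm_minus_commute)
  have hn2: "(norm h)^2 \<le> \<Delta>^2" using hn by (intro power_mono) auto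
  have diff: "model f x \<Delta> y p z - f z
      = a + bv \<bullet> h + (1/2) * (h \<bullet> (?H *v h)) - (f z - f x - gradf x \<bullet> h)"
    unfolding model_def model_c_def a_def bv_def h_def by (simp add: inner_diff_left)
  have e2: "\<bar>bv \<bullet> h\<bar> \<le> S * (nX * R / \<Delta>) * \<Delta>"
  proof -
    have "\<bar>bv \<bullet> h\<bar> \<le> norm bv * norm h" by (rule Cauchy_Schwarz_ineq2)
    also have "\<dots> \<le> S * (nX * R / \<Delta>) * \<Delta>" by (rule mult_mono[OF bn hn]) (use S0 nX0 R0 Delta_pos in simp_all)
    finally show ?thesis .
  qed
  have e3: "\<bar>(1/2) * (h \<bullet> (?H *v h))\<bar> \<le> kH / 2 * \<Delta>^2"
  proof -
    have "\<bar>h \<bullet> (?H *v h)\<bar> \<le> kH * (norm h)^2" unfolding kH_def by (rule H_quad)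
    also have "\<dots> \<le> kH * \<Delta>^2" using kH0 hn2 by (rule mult_left_mono[rotated])
    finally show ?thesis by simp
  qed
  have e4: "\<bar>f z - f x - gradf x \<bullet> h\<bar> \<le> L / 2 * \<Delta>^2"
  proof -
    have "\<bar>f z - f x - gradf x \<bullet> h\<bar> \<le> L / 2 * (norm h)^2" unfolding h_def by (rule taylor_bound[OF deriv lip])
    also have "\<dots> \<le> L / 2 * \<Delta>^2" using L_nonneg hn2 by (intro mult_left_mono) auto
    finally show ?thesis .
  qed
  have eq1: "nX * R + S * (nX * R / \<Delta>) * \<Delta> + kH / 2 * \<Delta>^2 + L / 2 * \<Delta>^2 = kmf * \<Delta>^2"
    unfolding kmf_def R_def S_def using Delta_pos by (simp add: field_simps power2_eq_square)
  have P1: "\<bar>model f x \<Delta> y p z - f z\<bar> \<le> kmf * \<Delta>^2"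
    unfolding diff using ab e2 e3 e4 eq1 by linarith
  have gdiff: "model_grad f x \<Delta> y p z - gradf z = bv + ?H *v h - (gradf z - gradf x)"
    unfolding model_grad_def bv_def h_def by (simp add: algebra_simps)
  have g2: "norm (?H *v h) \<le> kH * \<Delta>"
  proof -
    have "norm (?H *v h) \<le> kH * norm h" unfolding kH_def by (rule H_norm)
    also have "\<dots> \<le> kH * \<Delta>" using kH0 hn by (rule mult_left_mono[rotated])
    finally show ?thesis .
  qed
  have g3: "norm (gradf z - gradf x) \<le> L * \<Delta>"
  proof -
    have "norm (gradf z - gradf x) \<le> L * norm (z - x)" by (rule lip)
    also have "\<dots> \<le> L * \<Delta>" using L_nonneg hn unfolding h_def by (rule mult_left_mono[rotated])
    finally show ?thesis .
  qed
  have gtri: "norm (model_grad f x \<Delta> y p z - gradf z) \<le> norm bv + norm (?H *v h) + norm (gradf z - gradf x)"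
  proof -
    have "norm (bv + ?H *v h - (gradf z - gradf x)) \<le> norm (bv + ?H *v h) + norm (gradf z - gradf x)"
      by (rule norm_triangle_ineq4)
    moreover have "norm (bv + ?H *v h) \<le> norm bv + norm (?H *v h)" by (rule norm_triangle_ineq)
    ultimately show ?thesis unfolding gdiff by linarith
  qed
  define P where "P = (L + kH) * \<beta>^2 * nX * \<Delta>"
  have P0: "0 \<le> P" unfolding P_def using L_nonneg kH0 nX0 Delta_pos by simp
  have eq2: "S * (nX * R / \<Delta>) = P * S / 2"
    unfolding P_def R_def using Delta_pos by (simp add: field_simps power2_eq_square)
  have eq3: "(2 * kmf + 2 * kH) * \<Delta> = P * (1 + S) + (L + kH) * \<Delta> + 2 * kH * \<Delta>"
    unfolding P_def kmf_def S_def by (simp add: field_simps)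
  have "0 \<le> P * (1 + S / 2)" using P0 S0 by simp
  hence "P * S / 2 \<le> P * (1 + S)" by (simp add: algebra_simps)
  moreover have "0 \<le> kH * \<Delta>" using kH0 Delta_pos by simp
  have P2: "norm (model_grad f x \<Delta> y p z - gradf z) \<le> (2 * kmf + 2 * kH) * \<Delta>"
  proof -
    have "(L + kH) * \<Delta> = L * \<Delta> + kH * \<Delta>" by (simp add: distrib_right)
    thus ?thesis using gtri bn g2 g3 eq2 eq3 \<open>P * S / 2 \<le> P * (1 + S)\<close> \<open>0 \<le> kH * \<Delta>\<close> by linarith
  qed
  show ?thesis using P1 P2 by simp
qed

end

theorem theorem5p15:
  fixes f :: "real^'n \<Rightarrow> real" and gradf :: "real^'n \<Rightarrow> real^'n"
    and L \<Delta> \<beta> :: real and x :: "real^'n" and y :: "nat \<Rightarrow> real^'n" and p :: nat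
  assumes bdd_below: "\<exists>b. \<forall>u. b \<le> f u"
    and deriv: "\<And>u. (f has_derivative (\<lambda>h. gradf u \<bullet> h)) (at u)"
    and cont: "continuous_on UNIV gradf"
    and lip: "\<And>u v. norm (gradf u - gradf v) \<le> L * norm (u - v)"
    and p_lo: "CARD('n) + 2 \<le> p"
    and p_hi: "p \<le> (CARD('n) + 1) * (CARD('n) + 2) div 2 - 1"
    and Delta_pos: "\<Delta> > 0" and beta_pos: "\<beta> > 0"
    and pts: "\<And>i. i < p \<Longrightarrow> norm (y i - x) \<le> \<beta> * \<Delta>"
    and F_inv: "mat_invertible (p + CARD('n) + 1) (Fhat x \<Delta> y p)"
  shows "let \<kappa>H = L / 2 * real p * \<beta>^4
               * mat_norm_inf (p + CARD('n) + 1) (p + CARD('n) + 1)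
                   (mat_inv (p + CARD('n) + 1) (Fhat x \<Delta> y p));
             \<kappa>mf = (L + \<kappa>H) / 2 * (1 + sqrt (real CARD('n))) * \<beta>^2
                   * mat_norm_inf (CARD('n) + 1) p (pinv p (CARD('n) + 1) (Mhat x \<Delta> y p))
                 + (L + \<kappa>H) / 2;
             \<kappa>mg = 2 * \<kappa>mf + 2 * \<kappa>H
         in \<forall>z \<in> cball x \<Delta>.
              \<bar>model f x \<Delta> y p z - f z\<bar> \<le> \<kappa>mf * \<Delta>^2
            \<and> norm (model_grad f x \<Delta> y p z - gradf z) \<le> \<kappa>mg * \<Delta>"
    unfolding Let_def
  using main_bound[OF deriv lip Delta_pos beta_pos pts F_inv] by blast

end
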